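(* Suppose $n\ge3$. For $\ell\ge0$ and $a=(a_1,\dots,a_\ell)\in\{1,\dots,n\}^\ell$, let $$|a_1a_2\cdots a_\ell\rangle=\sum_{k\ge0}\frac{(-1)^k}{k!}\,f_k\!\left(-\ell-\tfrac n2\right)F^k\Big[(\operatorname{ad}E)^k(x^{a_1}x^{a_2}\cdots x^{a_\ell})\Big](1)\in\mathbb{C}[x^1,\dots,x^n],$$ where a differential operator applied to $1$ means its action on the constant polynomial $1$, and $F^k$ acts by multiplication. Then $$|a_1a_2\cdots a_\ell\rangle=\sum_{k\ge0}f_k\!\left(-\ell-\tfrac n2\right)\Big(\tfrac12x_bx^b\Big)^k\sum_{M}\ \prod_{\{i,j\}\in M}\eta^{a_ia_j}\prod_{m\in\{1,\dots,\ell\}\setminus\bigcup M}x^{a_m},$$ where for each $k$ the inner sum runs over all sets $M$ of $k$ pairwise disjoint 2-element subsets of $\{1,\dots,\ell\}$ (i.e. the inner sum is the sum of all distinct degree $\ell-2k$ ordered $\eta x$-monomials $\eta^{b_1b_2}\cdots\eta^{b_{2k-1}b_{2k}}x^{b_{2k+1}}\cdots x^{b_\ell}$ with $b$ a permutation of $a$, positions of $a$ being regarded as distinct).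
   Context: $(\eta_{ab})$ is a non-degenerate symmetric $n\times n$ matrix (entries complex, or formal central variables) with inverse $(\eta^{ab})$. Repeated upper/lower indices are summed over $\{1,\dots,n\}$; $x_a=\eta_{ab}x^b$, $\partial_a=\partial/\partial x^a$, $\partial^a=\eta^{ab}\partial_b$. Operators on polynomials: $E=\frac i2\partial_a\partial^a$, $F=\frac i2x_ax^a$ (multiplication), $H=-\frac12(x^a\partial_a+\partial_ax^a)$, which acts on homogeneous polynomials of degree $d$ by the scalar $-d-\frac n2$; $(\operatorname{ad}E)(D)=ED-DE$ for a differential operator $D$. $f_0=1$ and $f_k(t)=\big((t+2)(t+3)\cdots(t+1+k)\big)^{-1}$ for $k\ge1$. (In the paper, $|a_1\cdots a_\ell\rangle=P(x^{a_1}\cdots x^{a_\ell}+I)\cdot1$ with $P$ the extremal projector of $\mathfrak{sl}_2$; the definition above is this expression written out, with $H$ evaluated on the resulting degree-$\ell$ polynomial.) *)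

theory Defs
  imports Complex_Main "HOL-Library.Poly_Mapping"
begin

text \<open>Polynomials in the commuting variables x^1, ..., x^n with complex coefficients:
  finitely supported maps from monomials (exponent vectors) to coefficients.\<close>
type_synonym cpoly = "(nat \<Rightarrow>\<^sub>0 nat) \<Rightarrow>\<^sub>0 complex"

definition X :: "nat \<Rightarrow> cpoly" where
  "X a = Poly_Mapping.single (Poly_Mapping.single a 1) 1"

definition const :: "complex \<Rightarrow> cpoly" where
  "const c = Poly_Mapping.single 0 c"

definition pd :: "nat \<Rightarrow> cpoly \<Rightarrow> cpoly" where
  "pd a p = (\<Sum>m::nat \<Rightarrow>\<^sub>0 nat\<in>Poly_Mapping.keys p. Poly_Mapping.single (m - Poly_Mapping.single a 1)
                 (of_nat (Poly_Mapping.lookup m a) * Poly_Mapping.lookup p m))"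

text \<open>E = (i/2) d_a d^a = (i/2) eta^{ab} d_a d_b, with etainv the inverse matrix.\<close>
definition opE :: "nat \<Rightarrow> (nat \<Rightarrow> nat \<Rightarrow> complex) \<Rightarrow> cpoly \<Rightarrow> cpoly" where
  "opE n etainv p = const (\<i>/2) * (\<Sum>a\<in>{1..n}. \<Sum>b\<in>{1..n}. const (etainv a b) * pd a (pd b p))"

text \<open>x_b x^b = eta_{ab} x^a x^b.\<close>
definition xsq :: "nat \<Rightarrow> (nat \<Rightarrow> nat \<Rightarrow> complex) \<Rightarrow> cpoly" where
  "xsq n eta = (\<Sum>a\<in>{1..n}. \<Sum>b\<in>{1..n}. const (eta a b) * X a * X b)"

definition polyF :: "nat \<Rightarrow> (nat \<Rightarrow> nat \<Rightarrow> complex) \<Rightarrow> cpoly" where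
  "polyF n eta = const (\<i>/2) * xsq n eta"

definition adE :: "nat \<Rightarrow> (nat \<Rightarrow> nat \<Rightarrow> complex) \<Rightarrow> (cpoly \<Rightarrow> cpoly) \<Rightarrow> (cpoly \<Rightarrow> cpoly)" where
  "adE n etainv D = (\<lambda>p. opE n etainv (D p) - D (opE n etainv p))"

definition fk :: "nat \<Rightarrow> complex \<Rightarrow> complex" where
  "fk k t = (if k = 0 then 1 else inverse (\<Prod>j\<in>{2..k+1}. t + of_nat j))"

text \<open>The vector |a_1 ... a_l> (positions 0..l-1 of the list a).\<close>
definition ket :: "nat \<Rightarrow> (nat \<Rightarrow> nat \<Rightarrow> complex) \<Rightarrow> (nat \<Rightarrow> nat \<Rightarrow> complex) \<Rightarrow> nat list \<Rightarrow> cpoly" where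
  "ket n eta etainv a =
     (let l = length a; t = - of_nat l - of_nat n / 2 in
      \<Sum>k\<le>l. const ((-1)^k / of_nat (fact k) * fk k t) * polyF n eta ^ k *
         ((adE n etainv ^^ k) (\<lambda>p. prod_list (map X a) * p)) 1)"

definition matchings :: "nat \<Rightarrow> nat \<Rightarrow> nat set set set" where
  "matchings l k = {M. M \<subseteq> {e. \<exists>i j. e = {i, j} \<and> i \<noteq> j \<and> i < l \<and> j < l}
                        \<and> pairwise disjnt M \<and> card M = k}"

end

theory Submission
  imports Defs
begin

lemma const_mult: "const (x * y) = const x * const y"
  by (simp add: const_def mult_single)
lemma const_add: "const (x + y) = const x + const y"
  by (simp add: const_def single_add)
lemma const_1[simp]: "const 1 = 1" by (simp add: const_def)
lemma const_0[simp]: "const 0 = 0" by (simp add: const_def)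
lemma const_pow: "const (x ^ k) = const x ^ k"
  by (induct k) (simp_all add: const_mult)

lemma pd_alt:
  assumes "finite S" "Poly_Mapping.keys p \<subseteq> S"
  shows "pd a p = (\<Sum>m\<in>S. Poly_Mapping.single (m - Poly_Mapping.single a 1)
                 (of_nat (Poly_Mapping.lookup m a) * Poly_Mapping.lookup p m))"
  unfolding pd_def
  by (rule sum.mono_neutral_left) (use assms in \<open>auto simp: in_keys_iff\<close>)

lemma pd_add: "pd a (p + q) = pd a p + pd a q"
proof -
  have f: "finite (Poly_Mapping.keys p \<union> Poly_Mapping.keys q)" by simp
  have "pd a (p + q) = (\<Sum>m\<in>Poly_Mapping.keys p \<union> Poly_Mapping.keys q. Poly_Mapping.single (m - Poly_Mapping.single a 1)
                 (of_nat (Poly_Mapping.lookup m a) * Poly_Mapping.lookup (p+q) m))"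
    by (rule pd_alt[OF f]) (simp add: Poly_Mapping.keys_add)
  also have "\<dots> = pd a p + pd a q"
    by (simp add: pd_alt[OF f, of p] pd_alt[OF f, of q] Poly_Mapping.lookup_add distrib_left single_add sum.distrib)
  finally show ?thesis .
qed

lemma pd_zero[simp]: "pd a 0 = 0"
  by (simp add: pd_def)

lemma pd_single: "pd a (Poly_Mapping.single m c) =
   Poly_Mapping.single (m - Poly_Mapping.single a 1) (of_nat (Poly_Mapping.lookup m a) * c)"
  by (subst pd_alt[of "{m}"]) auto

lemma poly_expand: "p = (\<Sum>m\<in>Poly_Mapping.keys p. Poly_Mapping.single m (Poly_Mapping.lookup p m))"
proof (rule poly_mapping_eqI)
  fix k
  have "Poly_Mapping.lookup (\<Sum>m\<in>A. Poly_Mapping.single m (Poly_Mapping.lookup p m)) k = (if k \<in> A then Poly_Mapping.lookup p k else 0)"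
    if "finite A" for A
    using that by (induct A rule: finite_induct) (auto simp: Poly_Mapping.lookup_add Poly_Mapping.lookup_single when_def)
  then show "Poly_Mapping.lookup p k = Poly_Mapping.lookup (\<Sum>m\<in>Poly_Mapping.keys p. Poly_Mapping.single m (Poly_Mapping.lookup p m)) k"
    by (simp add: in_keys_iff)
qed

lemma additive_sum:
  fixes f :: "'a::comm_monoid_add \<Rightarrow> 'b::ab_group_add"
  assumes "\<And>x y. f (x + y) = f x + f y"
  shows "f (sum g A) = (\<Sum>i\<in>A. f (g i))"
proof -
  have z: "f 0 = 0" using assms[of 0 0] by simp
  show ?thesis
    by (induct A rule: infinite_finite_induct) (simp_all add: z assms)
qed

lemma linear_ext:
  fixes f g :: "cpoly \<Rightarrow> cpoly"
  assumes "\<And>x y. f (x + y) = f x + f y" "\<And>x y. g (x + y) = g x + g y"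
    and "\<And>m c. f (Poly_Mapping.single m c) = g (Poly_Mapping.single m c)"
  shows "f p = g p"
proof -
  have "f p = f (\<Sum>m\<in>Poly_Mapping.keys p. Poly_Mapping.single m (Poly_Mapping.lookup p m))" by (subst poly_expand) simp
  also have "\<dots> = (\<Sum>m\<in>Poly_Mapping.keys p. f (Poly_Mapping.single m (Poly_Mapping.lookup p m)))" by (rule additive_sum[OF assms(1)])
  also have "\<dots> = (\<Sum>m\<in>Poly_Mapping.keys p. g (Poly_Mapping.single m (Poly_Mapping.lookup p m)))" by (simp add: assms(3))
  also have "\<dots> = g (\<Sum>m\<in>Poly_Mapping.keys p. Poly_Mapping.single m (Poly_Mapping.lookup p m))" by (rule additive_sum[OF assms(2), symmetric])
  also have "\<dots> = g p" by (subst (2) poly_expand) simp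
  finally show ?thesis .
qed

lemma pd_sum: "pd a (sum g A) = (\<Sum>i\<in>A. pd a (g i))"
  by (rule additive_sum) (rule pd_add)

lemma pd_const_mult: "pd a (const c * p) = const c * pd a p"
proof (rule linear_ext[where f = "\<lambda>p. pd a (const c * p)" and g = "\<lambda>p. const c * pd a p"])
  fix m d
  show "pd a (const c * Poly_Mapping.single m d) = const c * pd a (Poly_Mapping.single m d)"
    by (simp add: const_def mult_single pd_single ac_simps)
qed (simp_all add: distrib_left pd_add)

lemma pd_X_mult: "pd a (X b * p) = (if a = b then p else 0) + X b * pd a p"
proof (rule linear_ext[where f = "\<lambda>p. pd a (X b * p)" and g = "\<lambda>p. (if a = b then p else 0) + X b * pd a p"])
  fix m and d :: complex
  let ?A = "Poly_Mapping.single a (1::nat)" and ?B = "Poly_Mapping.single b (1::nat)"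
  show "pd a (X b * Poly_Mapping.single m d) = (if a = b then Poly_Mapping.single m d else 0) + X b * pd a (Poly_Mapping.single m d)"
  proof (cases "a = b")
    case True
    show ?thesis
    proof (cases "Poly_Mapping.lookup m a = 0")
      case True
      then show ?thesis using \<open>a = b\<close>
        by (simp add: X_def mult_single pd_single Poly_Mapping.lookup_add)
    next
      case False
      then have "?B + (m - ?A) = m" using \<open>a = b\<close>
        by (intro poly_mapping_eqI) (auto simp: Poly_Mapping.lookup_add Poly_Mapping.lookup_minus Poly_Mapping.lookup_single when_def)
      then show ?thesis using \<open>a = b\<close>
        by (simp add: X_def mult_single pd_single Poly_Mapping.lookup_add algebra_simps flip: single_add)
    qed
  next
    case False
    then have "?B + m - ?A = ?B + (m - ?A)"
      by (intro poly_mapping_eqI) (auto simp: Poly_Mapping.lookup_add Poly_Mapping.lookup_minus Poly_Mapping.lookup_single when_def)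
    with False show ?thesis
      by (simp add: X_def mult_single pd_single Poly_Mapping.lookup_add Poly_Mapping.lookup_single)
  qed
qed (auto simp: distrib_left pd_add)

lemma pd_one[simp]: "pd a 1 = 0"
  by (simp add: pd_single flip: single_one)

lemma pd_X: "pd a (X b) = (if a = b then 1 else 0)"
  using pd_X_mult[of a b 1] by simp

definition Lap :: "nat \<Rightarrow> (nat \<Rightarrow> nat \<Rightarrow> complex) \<Rightarrow> cpoly \<Rightarrow> cpoly" where
  "Lap n N p = (\<Sum>a\<in>{1..n}. \<Sum>b\<in>{1..n}. const (N a b) * pd a (pd b p))"

lemma opE_Lap: "opE n N p = const (\<i>/2) * Lap n N p"
  by (simp add: opE_def Lap_def)

lemma Lap_add: "Lap n N (p + q) = Lap n N p + Lap n N q"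
  by (simp add: Lap_def pd_add distrib_left sum.distrib)

lemma Lap_sum: "Lap n N (sum g A) = (\<Sum>i\<in>A. Lap n N (g i))"
  by (rule additive_sum) (rule Lap_add)

lemma Lap_const_mult: "Lap n N (const c * p) = const c * Lap n N p"
  unfolding Lap_def pd_const_mult by (simp add: sum_distrib_left mult.left_commute)

lemma Lap_zero[simp]: "Lap n N 0 = 0" by (simp add: Lap_def)
lemma Lap_one[simp]: "Lap n N 1 = 0" by (simp add: Lap_def)

lemma Lap_X_mult:
  assumes c: "c \<in> {1..n}" and sym: "\<And>i j. i \<in> {1..n} \<Longrightarrow> j \<in> {1..n} \<Longrightarrow> N i j = N j i"
  shows "Lap n N (X c * Q) = X c * Lap n N Q + 2 * (\<Sum>b\<in>{1..n}. const (N c b) * pd b Q)"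
proof -
  have e: "pd a (pd b (X c * Q)) = (if b = c then pd a Q else 0) + (if a = c then pd b Q else 0)
            + X c * pd a (pd b Q)" for a b
    by (simp add: pd_X_mult pd_add)
  have "Lap n N (X c * Q) = (\<Sum>a\<in>{1..n}. \<Sum>b\<in>{1..n}. (if b = c then const (N a b) * pd a Q else 0)
        + (if a = c then const (N a b) * pd b Q else 0) + X c * (const (N a b) * pd a (pd b Q)))"
    unfolding Lap_def e by (intro sum.cong refl) (simp add: algebra_simps)
  also have "\<dots> = (\<Sum>a\<in>{1..n}. const (N a c) * pd a Q) + (\<Sum>b\<in>{1..n}. const (N c b) * pd b Q)
       + X c * Lap n N Q"
  proof -
    have 1: "(\<Sum>a\<in>{1..n}. \<Sum>b\<in>{1..n}. (if b = c then const (N a b) * pd a Q else 0))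
       = (\<Sum>a\<in>{1..n}. const (N a c) * pd a Q)"
      using c by (intro sum.cong) auto
    have 2: "(\<Sum>a\<in>{1..n}. \<Sum>b\<in>{1..n}. (if a = c then const (N a b) * pd b Q else 0))
       = (\<Sum>a\<in>{1..n}. if a = c then (\<Sum>b\<in>{1..n}. const (N a b) * pd b Q) else 0)"
      by (intro sum.cong) auto
    have 3: "(\<Sum>a\<in>{1..n}. \<Sum>b\<in>{1..n}. X c * (const (N a b) * pd a (pd b Q))) = X c * Lap n N Q"
      by (simp add: Lap_def sum_distrib_left)
    show ?thesis unfolding sum.distrib 1 2 3 using c by simp
  qed
  also have "(\<Sum>a\<in>{1..n}. const (N a c) * pd a Q) = (\<Sum>b\<in>{1..n}. const (N c b) * pd b Q)"
    using c sym by (intro sum.cong) auto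
  finally show ?thesis by (simp only: mult_2 add_ac)
qed

definition XP :: "nat list \<Rightarrow> nat set \<Rightarrow> cpoly" where
  "XP a S = (\<Prod>m\<in>S. X (a ! m))"

definition prs :: "nat set \<Rightarrow> nat set set" where
  "prs S = {e. \<exists>i j. e = {i, j} \<and> i \<noteq> j \<and> i \<in> S \<and> j \<in> S}"

definition cc :: "nat list \<Rightarrow> (nat \<Rightarrow> nat \<Rightarrow> complex) \<Rightarrow> nat set \<Rightarrow> complex" where
  "cc a N e = N (a ! Min e) (a ! Max e)"

lemma prs_sub: "prs S \<subseteq> Pow S" by (auto simp: prs_def)
lemma finite_prs: "finite S \<Longrightarrow> finite (prs S)"
  by (meson finite_Pow_iff prs_sub rev_finite_subset)

lemma pd_XP:
  assumes "finite S"
  shows "pd b (XP a S) = (\<Sum>j\<in>S. if a ! j = b then XP a (S - {j}) else 0)"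
  using assms
proof (induct S rule: finite_induct)
  case empty
  then show ?case by (simp add: XP_def)
next
  case (insert s S)
  have XPi: "XP a (insert s S) = X (a ! s) * XP a S" using insert by (simp add: XP_def)
  have XPj: "XP a (insert s S - {j}) = X (a ! s) * XP a (S - {j})" if "j \<in> S" for j
  proof -
    have "insert s S - {j} = insert s (S - {j})" using that insert by auto
    then show ?thesis using insert by (simp add: XP_def)
  qed
  have XPs: "insert s S - {s} = S" using insert by auto
  show ?case
    unfolding XPi pd_X_mult insert(3)
    using insert by (auto simp: sum_distrib_left XPj XPs intro!: sum.cong)
qed

lemma cc_pair: 
  assumes sym: "\<And>i j. i \<in> {1..n} \<Longrightarrow> j \<in> {1..n} \<Longrightarrow> N i j = N j i"
    and "a ! s \<in> {1..n}" "a ! j \<in> {1..n}"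
  shows "cc a N {s, j} = N (a ! s) (a ! j)"
  using assms by (cases "s \<le> j") (auto simp: cc_def max_def min_def)

lemma Lap_XP:
  assumes sym: "\<And>i j. i \<in> {1..n} \<Longrightarrow> j \<in> {1..n} \<Longrightarrow> N i j = N j i"
    and "finite S" and "\<forall>j\<in>S. a ! j \<in> {1..n}"
  shows "Lap n N (XP a S) = 2 * (\<Sum>e\<in>prs S. const (cc a N e) * XP a (S - e))"
  using assms(2,3)
proof (induct S rule: finite_induct)
  case empty
  have "prs {} = {}" by (auto simp: prs_def)
  then show ?case by (simp add: XP_def)
next
  case (insert s S)
  have XPi: "XP a (insert s S) = X (a ! s) * XP a S" using insert by (simp add: XP_def)
  have s: "a ! s \<in> {1..n}" using insert by auto
  have XPe: "XP a (insert s S - e) = X (a ! s) * XP a (S - e)" if "e \<in> prs S" for e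
  proof -
    have "e \<subseteq> S" using that prs_sub by auto
    then have "insert s S - e = insert s (S - e)" using insert by auto
    then show ?thesis using insert by (simp add: XP_def)
  qed
  have pdsum: "(\<Sum>b\<in>{1..n}. const (N (a ! s) b) * pd b (XP a S))
      = (\<Sum>j\<in>S. const (N (a ! s) (a ! j)) * XP a (S - {j}))"
  proof -
    have "(\<Sum>b\<in>{1..n}. const (N (a ! s) b) * pd b (XP a S))
        = (\<Sum>j\<in>S. \<Sum>b\<in>{1..n}. if b = a ! j then const (N (a ! s) b) * XP a (S - {j}) else 0)"
      unfolding pd_XP[OF insert(1)] sum_distrib_left
      by (subst sum.swap) (auto intro!: sum.cong)
    also have "\<dots> = (\<Sum>j\<in>S. const (N (a ! s) (a ! j)) * XP a (S - {j}))"
      using insert(4) by (intro sum.cong) auto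
    finally show ?thesis .
  qed
  have prsi: "prs (insert s S) = prs S \<union> (\<lambda>j. {s, j}) ` S"
    using insert(2) by (auto simp: prs_def)
  have disj: "prs S \<inter> (\<lambda>j. {s, j}) ` S = {}"
    using insert(2) prs_sub by auto
  have inj: "inj_on (\<lambda>j. {s, j}) S"
    using insert(2) by (auto simp: inj_on_def doubleton_eq_iff)
  have "(\<Sum>e\<in>(\<lambda>j. {s, j}) ` S. const (cc a N e) * XP a (insert s S - e))
      = (\<Sum>j\<in>S. const (N (a ! s) (a ! j)) * XP a (S - {j}))"
  proof (subst sum.reindex[OF inj], intro sum.cong refl)
    fix j assume j: "j \<in> S"
    have "insert s S - {s, j} = S - {j}" using insert(2) by auto
    then show "((\<lambda>e. const (cc a N e) * XP a (insert s S - e)) \<circ> (\<lambda>j. {s, j})) j =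
         const (N (a ! s) (a ! j)) * XP a (S - {j})"
      using cc_pair[OF sym s, where j=j] insert(4) j by auto
  qed
  moreover have "(\<Sum>e\<in>prs S. const (cc a N e) * XP a (insert s S - e))
      = X (a ! s) * (\<Sum>e\<in>prs S. const (cc a N e) * XP a (S - e))"
    by (simp add: XPe sum_distrib_left ac_simps)
  ultimately have A: "(\<Sum>e\<in>prs (insert s S). const (cc a N e) * XP a (insert s S - e))
     = X (a ! s) * (\<Sum>e\<in>prs S. const (cc a N e) * XP a (S - e))
       + (\<Sum>j\<in>S. const (N (a ! s) (a ! j)) * XP a (S - {j}))"
    unfolding prsi using insert(1) by (simp add: sum.union_disjoint[OF finite_prs _ disj])
  have IH: "Lap n N (XP a S) = 2 * (\<Sum>e\<in>prs S. const (cc a N e) * XP a (S - e))"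
    using insert by auto
  have "Lap n N (XP a (insert s S)) = X (a ! s) * Lap n N (XP a S)
      + 2 * (\<Sum>b\<in>{1..n}. const (N (a ! s) b) * pd b (XP a S))"
    by (simp only: XPi Lap_X_mult[OF s sym])
  then show ?case unfolding A IH pdsum by (simp only: distrib_left mult.left_commute)
qed

definition RR :: "nat \<Rightarrow> nat set set \<Rightarrow> nat set" where
  "RR l M = {0..<l} - \<Union>M"

lemma mat_prs: "matchings l k = {M. M \<subseteq> prs {0..<l} \<and> pairwise disjnt M \<and> card M = k}"
  unfolding matchings_def prs_def by auto

lemma finite_mat: "finite (matchings l k)"
proof -
  have "matchings l k \<subseteq> Pow (prs {0..<l})" by (auto simp: mat_prs)
  then show ?thesis by (rule finite_subset) (simp add: finite_prs)
qed

lemma mat_finite_M: "M \<in> matchings l k \<Longrightarrow> finite M"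
  by (auto simp: mat_prs intro: finite_subset[OF _ finite_prs])

lemma mat0: "matchings l 0 = {{}}"
proof -
  have "M = {}" if "M \<in> matchings l 0" for M
    using that mat_finite_M[OF that] by (auto simp: mat_prs)
  moreover have "{} \<in> matchings l 0" by (simp add: mat_prs)
  ultimately show ?thesis by blast
qed

lemma prs_ne: "e \<in> prs S \<Longrightarrow> e \<noteq> {}" by (auto simp: prs_def)

lemma mat_notin: "M \<in> matchings l k \<Longrightarrow> e \<in> prs (RR l M) \<Longrightarrow> e \<notin> M"
  using prs_sub[of "RR l M"] prs_ne[of e "RR l M"] by (auto simp: RR_def)

lemma mat_ins:
  assumes "M \<in> matchings l k" "e \<in> prs (RR l M)"
  shows "insert e M \<in> matchings l (Suc k)"
proof -
  have eM: "e \<notin> M" by (rule mat_notin[OF assms])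
  have fin: "finite M" by (rule mat_finite_M[OF assms(1)])
  have "e \<in> prs {0..<l}" using assms(2) by (auto simp: prs_def RR_def)
  moreover have "disjnt e f" if "f \<in> M" for f
    using assms(2) that prs_sub[of "RR l M"] by (auto simp: RR_def disjnt_def)
  ultimately show ?thesis using assms(1) eM fin
    by (auto simp: mat_prs pairwise_insert disjnt_sym)
qed

lemma mat_del:
  assumes "M' \<in> matchings l (Suc k)" "e \<in> M'"
  shows "M' - {e} \<in> matchings l k" "e \<in> prs (RR l (M' - {e}))"
proof -
  have fin: "finite M'" by (rule mat_finite_M[OF assms(1)])
  show "M' - {e} \<in> matchings l k"
    using assms fin by (auto simp: mat_prs pairwise_def)
  have e: "e \<in> prs {0..<l}" using assms by (auto simp: mat_prs)
  have "disjnt e f" if "f \<in> M'" "f \<noteq> e" for f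
    using assms that by (auto simp: mat_prs pairwise_def)
  then have "e \<subseteq> RR l (M' - {e})" using e prs_sub[of "{0..<l}"]
    by (auto simp: RR_def disjnt_def)
  then show "e \<in> prs (RR l (M' - {e}))" using e by (auto simp: prs_def)
qed

lemma RR_ins: "RR l (insert e M) = RR l M - e"
  by (auto simp: RR_def)

definition wt :: "nat list \<Rightarrow> (nat \<Rightarrow> nat \<Rightarrow> complex) \<Rightarrow> nat set set \<Rightarrow> complex" where
  "wt a N M = (\<Prod>e\<in>M. cc a N e)"

definition G :: "nat list \<Rightarrow> (nat \<Rightarrow> nat \<Rightarrow> complex) \<Rightarrow> nat \<Rightarrow> cpoly" where
  "G a N k = (\<Sum>M\<in>matchings (length a) k. const (wt a N M) * XP a (RR (length a) M))"

lemma fiber: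
  assumes "M' \<in> matchings l (Suc k)"
  shows "{x \<in> (SIGMA M:matchings l k. prs (RR l M)). (\<lambda>(M, e). insert e M) x = M'}
       = (\<lambda>e. (M' - {e}, e)) ` M'"
proof (intro equalityI subsetI)
  fix x assume x: "x \<in> {x \<in> (SIGMA M:matchings l k. prs (RR l M)). (\<lambda>(M, e). insert e M) x = M'}"
  then obtain M e where xe: "x = (M, e)" "M \<in> matchings l k" "e \<in> prs (RR l M)" "insert e M = M'"
    by auto
  have "e \<notin> M" by (rule mat_notin[OF xe(2,3)])
  then have "M = M' - {e}" using xe(4) by auto
  then show "x \<in> (\<lambda>e. (M' - {e}, e)) ` M'" using xe by auto
next
  fix x assume "x \<in> (\<lambda>e. (M' - {e}, e)) ` M'"
  then obtain e where e: "e \<in> M'" "x = (M' - {e}, e)" by auto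
  show "x \<in> {x \<in> (SIGMA M:matchings l k. prs (RR l M)). (\<lambda>(M, e). insert e M) x = M'}"
    using mat_del[OF assms e(1)] e by (auto simp: insert_absorb)
qed

lemma fiber_card:
  assumes "M' \<in> matchings l (Suc k)"
  shows "card {x \<in> (SIGMA M:matchings l k. prs (RR l M)). (\<lambda>(M, e). insert e M) x = M'} = Suc k"
proof -
  have "card ((\<lambda>e. (M' - {e}, e)) ` M') = card M'"
    by (rule card_image) (auto simp: inj_on_def)
  also have "\<dots> = Suc k" using assms by (simp add: mat_prs)
  finally show ?thesis by (simp add: fiber[OF assms])
qed

lemma count_sum:
  fixes F :: "nat set set \<Rightarrow> 'b::comm_ring_1"
  shows "(\<Sum>M\<in>matchings l k. \<Sum>e\<in>prs (RR l M). F (insert e M))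
       = of_nat (Suc k) * (\<Sum>M'\<in>matchings l (Suc k). F M')"
proof -
  let ?A = "SIGMA M:matchings l k. prs (RR l M)"
  let ?g = "\<lambda>(M, e). insert e M"
  have finA: "finite ?A"
    by (rule finite_SigmaI) (auto simp: finite_mat RR_def intro: finite_prs)
  have "(\<Sum>M\<in>matchings l k. \<Sum>e\<in>prs (RR l M). F (insert e M)) = (\<Sum>x\<in>?A. F (?g x))"
    by (subst sum.Sigma) (auto simp: finite_mat RR_def intro: finite_prs simp: split_def)
  also have "\<dots> = (\<Sum>M'\<in>matchings l (Suc k). \<Sum>x\<in>{x \<in> ?A. ?g x = M'}. F (?g x))"
    by (rule sum.group[symmetric]) (use finA in \<open>auto simp: finite_mat intro: mat_ins\<close>)
  also have "\<dots> = (\<Sum>M'\<in>matchings l (Suc k). of_nat (Suc k) * F M')"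
  proof (rule sum.cong[OF refl])
    fix M' assume M': "M' \<in> matchings l (Suc k)"
    have "(\<Sum>x\<in>{x \<in> ?A. ?g x = M'}. F (?g x)) = (\<Sum>x\<in>{x \<in> ?A. ?g x = M'}. F M')"
      by (rule sum.cong) auto
    also have "\<dots> = of_nat (Suc k) * F M'"
      using fiber_card[OF M'] by simp
    finally show "(\<Sum>x\<in>{x \<in> ?A. ?g x = M'}. F (?g x)) = of_nat (Suc k) * F M'" .
  qed
  finally show ?thesis by (simp add: sum_distrib_left)
qed

lemma Lap_G:
  assumes sym: "\<And>i j. i \<in> {1..n} \<Longrightarrow> j \<in> {1..n} \<Longrightarrow> N i j = N j i"
    and a: "set a \<subseteq> {1..n}"
  shows "Lap n N (G a N k) = 2 * of_nat (Suc k) * G a N (Suc k)"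
proof -
  let ?l = "length a"
  let ?F = "\<lambda>M'. const (wt a N M') * XP a (RR ?l M')"
  have "Lap n N (G a N k) = (\<Sum>M\<in>matchings ?l k. const (wt a N M) * Lap n N (XP a (RR ?l M)))"
    by (simp add: G_def Lap_sum Lap_const_mult)
  also have "\<dots> = (\<Sum>M\<in>matchings ?l k. 2 * (\<Sum>e\<in>prs (RR ?l M). ?F (insert e M)))"
  proof (rule sum.cong[OF refl])
    fix M assume M: "M \<in> matchings ?l k"
    have rng: "\<forall>j\<in>RR ?l M. a ! j \<in> {1..n}" using a nth_mem[of _ a] by (force simp: RR_def)
    have "const (wt a N M) * Lap n N (XP a (RR ?l M))
       = 2 * (\<Sum>e\<in>prs (RR ?l M). const (wt a N M) * const (cc a N e) * XP a (RR ?l M - e))"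
      using Lap_XP[OF sym _ rng] by (simp add: RR_def sum_distrib_left ac_simps)
    also have "\<dots> = 2 * (\<Sum>e\<in>prs (RR ?l M). ?F (insert e M))"
    proof -
      have "const (wt a N M) * const (cc a N e) * XP a (RR ?l M - e) = ?F (insert e M)"
        if "e \<in> prs (RR ?l M)" for e
        using mat_notin[OF M that] mat_finite_M[OF M]
        by (simp add: wt_def RR_ins const_mult ac_simps)
      then show ?thesis by simp
    qed
    finally show "const (wt a N M) * Lap n N (XP a (RR ?l M)) = 2 * (\<Sum>e\<in>prs (RR ?l M). ?F (insert e M))" .
  qed
  also have "\<dots> = 2 * of_nat (Suc k) * G a N (Suc k)"
    unfolding sum_distrib_left[symmetric] count_sum[of ?F] G_def by (simp only: mult.assoc)
  finally show ?thesis .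
qed

lemma inv_sym:
  fixes eta N :: "nat \<Rightarrow> nat \<Rightarrow> complex"
  assumes s: "\<And>i j. i \<in> {1..n} \<Longrightarrow> j \<in> {1..n} \<Longrightarrow> eta i j = eta j i"
    and r: "\<And>i j. i \<in> {1..n} \<Longrightarrow> j \<in> {1..n} \<Longrightarrow>
           (\<Sum>b\<in>{1..n}. eta i b * N b j) = (if i = j then 1 else 0)"
    and ij: "i \<in> {1..n}" "j \<in> {1..n}"
  shows "N i j = N j i"
proof -
  have "N j i = (\<Sum>k\<in>{1..n}. N k i * (if k = j then 1 else 0))"
    using ij by (simp add: if_distrib cong: if_cong)
  also have "\<dots> = (\<Sum>k\<in>{1..n}. N k i * (\<Sum>b\<in>{1..n}. eta k b * N b j))"
    using r ij by (intro sum.cong) auto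
  also have "\<dots> = (\<Sum>k\<in>{1..n}. \<Sum>b\<in>{1..n}. N k i * (eta b k * N b j))"
    unfolding sum_distrib_left
  proof (intro sum.cong refl)
    fix k b assume "k \<in> {1..n}" "b \<in> {1..n}"
    then show "N k i * (eta k b * N b j) = N k i * (eta b k * N b j)" using s by metis
  qed
  also have "\<dots> = (\<Sum>b\<in>{1..n}. \<Sum>k\<in>{1..n}. N k i * (eta b k * N b j))"
    by (rule sum.swap)
  also have "\<dots> = (\<Sum>b\<in>{1..n}. (\<Sum>k\<in>{1..n}. eta b k * N k i) * N b j)"
    by (simp add: sum_distrib_right sum_distrib_left ac_simps)
  also have "\<dots> = (\<Sum>b\<in>{1..n}. (if b = i then 1 else 0) * N b j)"
    using r ij by (intro sum.cong) auto
  also have "\<dots> = (\<Sum>b\<in>{1..n}. if b = i then N b j else 0)" by (intro sum.cong) auto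
  also have "\<dots> = N i j" using ij by simp
  finally show ?thesis by simp
qed

lemma const_of_nat: "const (of_nat m) = of_nat m"
  by (simp add: const_def)
lemma const_numeral: "const (numeral m) = numeral m"
  by (simp add: const_def)
lemma const_prod: "const (prod f A) = (\<Prod>x\<in>A. const (f x))"
  by (induct A rule: infinite_finite_induct) (simp_all add: const_mult)

lemma G0: "G a N 0 = XP a {0..<length a}"
  by (simp add: G_def mat0 wt_def RR_def)

lemma Lap_pow:
  assumes sym: "\<And>i j. i \<in> {1..n} \<Longrightarrow> j \<in> {1..n} \<Longrightarrow> N i j = N j i"
    and a: "set a \<subseteq> {1..n}"
  shows "(Lap n N ^^ k) (XP a {0..<length a}) = const (2 ^ k * fact k) * G a N k"
proof (induct k)
  case 0
  then show ?case by (simp add: G0)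
next
  case (Suc k)
  have "(Lap n N ^^ Suc k) (XP a {0..<length a}) = Lap n N (const (2 ^ k * fact k) * G a N k)"
    using Suc by simp
  also have "\<dots> = const (2 ^ k * fact k) * Lap n N (G a N k)" by (rule Lap_const_mult)
  also have "\<dots> = const (2 ^ k * fact k) * (2 * of_nat (Suc k) * G a N (Suc k))"
    by (simp only: Lap_G[OF sym a])
  also have "\<dots> = const (2 ^ Suc k * fact (Suc k)) * G a N (Suc k)"
  proof -
    have c: "(2::complex) ^ k * fact k * 2 * of_nat (Suc k) = 2 ^ Suc k * fact (Suc k)"
      by (simp only: fact_Suc power_Suc of_nat_fact mult_ac)
    have d: "(2 * of_nat (Suc k) :: cpoly) = const (2 * of_nat (Suc k))"
      by (simp only: const_mult const_numeral const_of_nat)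
    show ?thesis unfolding d by (simp only: const_mult[symmetric] mult.assoc[symmetric] c)
  qed
  finally show ?case .
qed

lemma opE_pow: "(opE n N ^^ k) p = const (\<i>/2) ^ k * (Lap n N ^^ k) p"
proof (induct k)
  case (Suc k)
  have "(opE n N ^^ Suc k) p = opE n N ((opE n N ^^ k) p)" by simp
  also have "\<dots> = const (\<i>/2) * Lap n N (const (\<i>/2) ^ k * (Lap n N ^^ k) p)"
    by (simp only: Suc opE_Lap)
  also have "\<dots> = const (\<i>/2) ^ Suc k * (Lap n N ^^ Suc k) p"
  proof -
    have "Lap n N (const (\<i>/2) ^ k * (Lap n N ^^ k) p) = const (\<i>/2) ^ k * Lap n N ((Lap n N ^^ k) p)"
      using Lap_const_mult[of n N "(\<i>/2)^k"] by (simp only: const_pow)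
    then show ?thesis by (simp only: power_Suc mult.assoc funpow.simps comp_apply)
  qed
  finally show ?case .
qed simp

lemma opE_0: "opE n N 0 = 0" by (simp add: opE_Lap)
lemma opE_1: "opE n N 1 = 0" by (simp add: opE_Lap)

lemma adE_pow0: "D 0 = 0 \<Longrightarrow> (adE n N ^^ k) D 0 = 0"
  by (induct k) (simp_all add: adE_def opE_0)

lemma adE_pow1: "D 0 = 0 \<Longrightarrow> (adE n N ^^ k) D 1 = (opE n N ^^ k) (D 1)"
  by (induct k) (simp_all add: adE_def opE_1 adE_pow0)

lemma coef: "(-1) ^ k / of_nat (fact k) * f * (\<i>/2) ^ k * (\<i>/2) ^ k * (2 ^ k * fact k)
    = f * (1/2 :: complex) ^ k"
proof -
  have ii: "(\<i>/2) * (\<i>/2) = (-1/4 :: complex)"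
    by (simp add: field_simps)
  have "(\<i>/2) ^ k * (\<i>/2) ^ k = (-1/4 :: complex) ^ k"
    by (simp only: power_mult_distrib[symmetric] ii)
  then have "(-1) ^ k * (\<i>/2) ^ k * (\<i>/2) ^ k * 2 ^ k = (-1) ^ k * (-1/4 :: complex) ^ k * 2 ^ k"
    by (simp only: mult.assoc)
  also have "\<dots> = ((-1) * (-1/4) * 2 :: complex) ^ k"
    by (simp only: power_mult_distrib)
  also have "((-1) * (-1/4) * 2 :: complex) = 1/2" by simp
  finally have h: "(-1) ^ k * (\<i>/2) ^ k * (\<i>/2) ^ k * 2 ^ k = (1/2 :: complex) ^ k" .
  have gen: "\<And>F m f A T. (F::complex) \<noteq> 0 \<Longrightarrow> m / F * f * A * A * (T * F) = f * (m * A * A * T)"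
    by (simp add: field_simps)
  have "(-1) ^ k / of_nat (fact k) * f * (\<i>/2) ^ k * (\<i>/2) ^ k * (2 ^ k * fact k)
     = (-1) ^ k / fact k * f * (\<i>/2) ^ k * (\<i>/2) ^ k * (2 ^ k * fact k)"
    by (simp only: of_nat_fact)
  also have "\<dots> = f * ((-1) ^ k * (\<i>/2) ^ k * (\<i>/2) ^ k * 2 ^ k)"
    by (rule gen) simp
  also have "\<dots> = f * (1/2) ^ k" by (simp only: h)
  finally show ?thesis .
qed

lemma assemble: "const (m * f) * (const A * x) ^ k * (const A ^ k * (const T * g))
   = const (m * f * A ^ k * A ^ k * T) * (x ^ k * g)"
  by (simp add: power_mult_distrib const_mult const_pow ac_simps)

lemma assemble2: "const f * (const B * x) ^ k * g = const (f * B ^ k) * (x ^ k * g)"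
  by (simp add: power_mult_distrib const_mult const_pow ac_simps)

theorem mainTheorem7:
  fixes n :: nat and eta etainv :: "nat \<Rightarrow> nat \<Rightarrow> complex" and a :: "nat list"
  assumes "n \<ge> 3"
    and "\<And>i j. i \<in> {1..n} \<Longrightarrow> j \<in> {1..n} \<Longrightarrow> eta i j = eta j i"
    and "\<And>i j. i \<in> {1..n} \<Longrightarrow> j \<in> {1..n} \<Longrightarrow>
           (\<Sum>b\<in>{1..n}. eta i b * etainv b j) = (if i = j then 1 else 0)"
    and "\<And>i j. i \<in> {1..n} \<Longrightarrow> j \<in> {1..n} \<Longrightarrow>
           (\<Sum>b\<in>{1..n}. etainv i b * eta b j) = (if i = j then 1 else 0)"
    and "set a \<subseteq> {1..n}"
  shows "ket n eta etainv a =
    (\<Sum>k\<le>length a. const (fk k (- of_nat (length a) - of_nat n / 2)) *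
        (const (1/2) * xsq n eta) ^ k *
        (\<Sum>M\<in>matchings (length a) k.
           (\<Prod>e\<in>M. const (etainv (a ! Min e) (a ! Max e))) *
           (\<Prod>m\<in>{0..<length a} - \<Union>M. X (a ! m))))"
proof -
  have symN: "\<And>i j. i \<in> {1..n} \<Longrightarrow> j \<in> {1..n} \<Longrightarrow> etainv i j = etainv j i"
    using inv_sym[OF assms(2) assms(3)] by blast
  have P: "prod_list (map X a) = XP a {0..<length a}"
    by (simp add: XP_def prod.list_conv_set_nth)
  have D: "(adE n etainv ^^ k) ((*) (prod_list (map X a))) 1
      = const (\<i>/2) ^ k * (const (2 ^ k * fact k) * G a etainv k)" for k
  proof -
    have "(adE n etainv ^^ k) ((*) (prod_list (map X a))) 1 = (opE n etainv ^^ k) (prod_list (map X a) * 1)"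
      by (rule adE_pow1) simp
    then show ?thesis by (simp only: mult_1_right opE_pow P Lap_pow[OF symN assms(5)])
  qed
  have inner: "(\<Sum>M\<in>matchings (length a) k.
           (\<Prod>e\<in>M. const (etainv (a ! Min e) (a ! Max e))) *
           (\<Prod>m\<in>{0..<length a} - \<Union>M. X (a ! m))) = G a etainv k" for k
    unfolding G_def wt_def cc_def XP_def RR_def const_prod ..
  show ?thesis
    unfolding ket_def Let_def
  proof (rule sum.cong[OF refl])
    fix k
    let ?t = "- of_nat (length a) - of_nat n / 2 :: complex"
    show "const ((- 1) ^ k / of_nat (fact k) * fk k ?t) * polyF n eta ^ k *
          (adE n etainv ^^ k) ((*) (prod_list (map X a))) 1 =
          const (fk k ?t) * (const (1 / 2) * xsq n eta) ^ k *
          (\<Sum>M\<in>matchings (length a) k.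
             (\<Prod>e\<in>M. const (etainv (a ! Min e) (a ! Max e))) *
             (\<Prod>m\<in>{0..<length a} - \<Union> M. X (a ! m)))"
      unfolding D inner polyF_def assemble unfolding assemble2
      using coef[of k "fk k ?t"] by (simp only: divide_inverse mult.assoc)
  qed
qed

end
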